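(* Let $M\in\mathbb{N}$, $r\in\{1,\dots,M\}$, let $C\in\mathbb{R}^{M\times M}$ have singular values $\lambda_1\ge\dots\ge\lambda_M$, and let $\pi_r\in\mathcal{S}_{M,r}$ maximize $\|\tilde\pi_r C\|_{S_2}$ over $\tilde\pi_r\in\mathcal{S}_{M,r}$. Put $\Delta_r:=\sum_{i=r+1}^{2r}\lambda_i^2$. (i) For every $\tilde\pi_r\in\mathcal{S}_{M,r}$, $$\|\tilde\pi_r C\|_{S_2}^2-\|\pi_r C\|_{S_2}^2\le-\tfrac12(\lambda_r^2-\lambda_{r+1}^2)\|\tilde\pi_r-\pi_r\|_{S_2}^2.$$ (ii) Assume $\lambda_r>0$. For every $\tilde\pi_r\in\mathcal{S}_{M,r}$ with $\|\tilde\pi_r-\pi_r\|_{S_2}\ge\lambda_r^{-1}\sqrt{2\Delta_r}$, $$\|\tilde\pi_r C\|_{S_2}^2-\|\pi_r C\|_{S_2}^2\le-\tfrac12\lambda_r^2\|\tilde\pi_r-\pi_r\|_{S_2}^2+\Delta_r.$$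
   Context: $\mathcal{S}_{M,r}$ denotes the set of all orthogonal projections of rank $r$ onto subspaces of $\mathbb{R}^M$. $\|\cdot\|_{S_2}$ is the Hilbert–Schmidt norm. Convention: $\lambda_i:=0$ for $i>M$. *)

theory Defs
  imports "HOL-Analysis.Analysis"
begin

definition hs_norm :: "real^'n^'n \<Rightarrow> real" where
  "hs_norm A = sqrt (\<Sum>i\<in>UNIV. \<Sum>j\<in>UNIV. (A $ i $ j)^2)"

definition orth_proj_rank :: "nat \<Rightarrow> (real^'n^'n) set" where
  "orth_proj_rank r = {P. transpose P = P \<and> P ** P = P \<and> rank P = r}"

text \<open>lam 1 \<ge> ... \<ge> lam M are the singular values of C (indexed from 1), with the
  convention lam i = 0 for i > M (and for i = 0): there is a singular value
  decomposition C = U diag(lam) V^T with U, V orthogonal.\<close>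
definition singular_values :: "real^'n^'n \<Rightarrow> (nat \<Rightarrow> real) \<Rightarrow> bool" where
  "singular_values C lam \<longleftrightarrow>
     (\<forall>i j. 1 \<le> i \<longrightarrow> i \<le> j \<longrightarrow> j \<le> CARD('n) \<longrightarrow> lam j \<le> lam i) \<and>
     (\<forall>i. 1 \<le> i \<longrightarrow> i \<le> CARD('n) \<longrightarrow> 0 \<le> lam i) \<and>
     (\<forall>i. i = 0 \<or> CARD('n) < i \<longrightarrow> lam i = 0) \<and>
     (\<exists>U V (\<sigma>::'n \<Rightarrow> nat). orthogonal_matrix U \<and> orthogonal_matrix V \<and>
        bij_betw \<sigma> UNIV {1..CARD('n)} \<and>
        C = U ** (\<chi> i j. if i = j then lam (\<sigma> i) else 0) ** transpose V)"

end

theory Submission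
  imports Defs
begin

lemma trace_rank:
  fixes P :: "real^'n^'n"
  assumes s: "transpose P = P" and i: "P ** P = P"
  shows "trace P = real (rank P)"
proof -
  let ?S = "range (\<lambda>x. P *v x)"
  have sub: "subspace ?S"
    by (intro linear_subspace_image subspace_UNIV) (simp add: matrix_vector_mul_linear)
  obtain B where B: "B \<subseteq> ?S" "pairwise orthogonal B" "\<And>x. x\<in>B \<Longrightarrow> norm x = 1"
     "independent B" "card B = dim ?S" "span B = ?S"
    using orthonormal_basis_subspace[OF sub] by blast
  have fin: "finite B" using B(4) independent_imp_finite by blast
  have Pu: "P *v u = u" if "u \<in> ?S" for u
    using that by (auto simp: matrix_vector_mul_assoc i)
  have uu: "u \<bullet> u = 1" if "u \<in> B" for u
    using B(3)[OF that] by (metis norm_eq_1)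
  have uv: "u \<bullet> v = 0" if "u \<in> B" "v \<in> B" "u \<noteq> v" for u v
    using B(2) that unfolding pairwise_def orthogonal_def by blast
  have exp: "v = (\<Sum>u\<in>B. (u \<bullet> v) *\<^sub>R u)" if "v \<in> ?S" for v
  proof -
    from that B(6) have "v \<in> span B" by simp
    then obtain c where c: "v = (\<Sum>u\<in>B. c u *\<^sub>R u)"
      using span_finite[OF fin] by auto
    have "u \<bullet> v = c u" if "u \<in> B" for u
    proof -
      have "u \<bullet> v = (\<Sum>w\<in>B. c w * (u \<bullet> w))" by (simp add: c inner_sum_right)
      also have "\<dots> = (\<Sum>w\<in>B. if w = u then c u else 0)"
        by (rule sum.cong) (auto simp: uu uv that)
      also have "\<dots> = c u" using fin that by simp
      finally show ?thesis .
    qed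
    then have "(\<Sum>u\<in>B. (u \<bullet> v) *\<^sub>R u) = (\<Sum>u\<in>B. c u *\<^sub>R u)"
      by (intro sum.cong) auto
    then show ?thesis using c by simp
  qed
  have Px: "P *v x = (\<Sum>u\<in>B. (u \<bullet> x) *\<^sub>R u)" for x
  proof -
    have "u \<bullet> (P *v x) = u \<bullet> x" if "u \<in> B" for u
    proof -
      have "u \<bullet> (P *v x) = (u v* P) \<bullet> x" by (rule dot_lmul_matrix[symmetric])
      also have "u v* P = transpose P *v u" by (rule transpose_matrix_vector[symmetric])
      also have "\<dots> = P *v u" by (simp only: s)
      also have "\<dots> = u" using Pu B(1) that by blast
      finally show ?thesis .
    qed
    then have "(\<Sum>u\<in>B. (u \<bullet> (P *v x)) *\<^sub>R u) = (\<Sum>u\<in>B. (u \<bullet> x) *\<^sub>R u)"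
      by (intro sum.cong) auto
    moreover have "P *v x = (\<Sum>u\<in>B. (u \<bullet> (P *v x)) *\<^sub>R u)"
      by (rule exp) auto
    ultimately show ?thesis by simp
  qed
  have "trace P = (\<Sum>i\<in>UNIV. (P *v axis i 1) $ i)"
    by (simp add: trace_def matrix_vector_mult_basis column_def)
  also have "\<dots> = (\<Sum>i\<in>UNIV. \<Sum>u\<in>B. (u $ i)^2)"
    unfolding Px by (simp add: inner_axis power2_eq_square)
  also have "\<dots> = (\<Sum>u\<in>B. \<Sum>i\<in>UNIV. (u $ i)^2)" by (rule sum.swap)
  also have "\<dots> = (\<Sum>u\<in>B. 1)"
    by (rule sum.cong) (auto simp: uu[symmetric] inner_vec_def power2_eq_square)
  also have "\<dots> = real (card B)" by simp
  finally show ?thesis using B(5) rank_dim_range[of P] by simp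
qed

lemma diagTT: "(transpose X ** X) $ j $ j = (\<Sum>k\<in>UNIV. ((X::real^'n^'n) $ k $ j)^2)"
  by (simp add: matrix_matrix_mult_def transpose_def power2_eq_square)

lemma diagTT_nonneg: "0 \<le> (transpose X ** (X::real^'n^'n)) $ j $ j"
  unfolding diagTT by (simp add: sum_nonneg)

lemma proj_diag:
  fixes P :: "real^'n^'n"
  assumes "transpose P = P" "P ** P = P"
  shows "P $ j $ j = (\<Sum>k\<in>UNIV. (P $ k $ j)^2)"
proof -
  have "P $ j $ j = (transpose P ** P) $ j $ j" using assms by simp
  then show ?thesis by (simp only: diagTT)
qed

lemma proj_diag_nonneg:
  fixes P :: "real^'n^'n"
  assumes "transpose P = P" "P ** P = P"
  shows "0 \<le> P $ j $ j"
  using proj_diag[OF assms] by (simp add: sum_nonneg)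

lemma proj_col_zero:
  fixes P :: "real^'n^'n"
  assumes "transpose P = P" "P ** P = P" "P $ j $ j = 0"
  shows "P $ k $ j = 0"
proof -
  have "(\<Sum>k\<in>UNIV. (P $ k $ j)^2) = 0" using proj_diag[OF assms(1,2)] assms(3) by simp
  then have "\<forall>k\<in>UNIV. (P $ k $ j)^2 = 0" by (subst sum_nonneg_eq_0_iff[symmetric]) auto
  then show ?thesis by simp
qed

lemma hs_trace: "hs_norm (X::real^'n^'n) = sqrt (trace (transpose X ** X))"
proof -
  have "trace (transpose X ** X) = (\<Sum>j\<in>UNIV. \<Sum>k\<in>UNIV. (X $ k $ j)^2)"
    unfolding trace_def diagTT ..
  also have "\<dots> = (\<Sum>k\<in>UNIV. \<Sum>j\<in>UNIV. (X $ k $ j)^2)" by (rule sum.swap)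
  finally show ?thesis unfolding hs_norm_def by simp
qed

lemma hs_sq: "(hs_norm (X::real^'n^'n))^2 = trace (transpose X ** X)"
proof -
  have "0 \<le> trace (transpose X ** X)" unfolding trace_def by (simp add: diagTT_nonneg sum_nonneg)
  then show ?thesis by (simp add: hs_trace)
qed

lemma hs_orth_left:
  fixes U X :: "real^'n^'n"
  assumes "orthogonal_matrix U"
  shows "hs_norm (U ** X) = hs_norm X"
proof -
  have "transpose (U ** X) ** (U ** X) = transpose X ** (transpose U ** U) ** X"
    by (simp add: matrix_transpose_mul matrix_mul_assoc)
  also have "\<dots> = transpose X ** X" using assms by (simp add: orthogonal_matrix_def)
  finally show ?thesis by (simp add: hs_trace)
qed

lemma hs_orth_right:
  fixes U X :: "real^'n^'n"
  assumes "orthogonal_matrix U"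
  shows "hs_norm (X ** U) = hs_norm X"
proof -
  have "trace (transpose (X ** U) ** (X ** U)) = trace ((transpose U ** (transpose X ** X)) ** U)"
    by (simp add: matrix_transpose_mul matrix_mul_assoc)
  also have "\<dots> = trace (U ** (transpose U ** (transpose X ** X)))" by (rule trace_mul_sym)
  also have "\<dots> = trace (transpose X ** X)" using assms
    by (simp add: orthogonal_matrix_def matrix_mul_assoc)
  finally show ?thesis by (simp add: hs_trace)
qed

lemma mmd_l: "(A::real^'n^'n) ** (B - C) = A ** B - A ** C"
  by (simp add: matrix_matrix_mult_def vec_eq_iff sum_subtractf right_diff_distrib)
lemma mmd_r: "((A::real^'n^'n) - B) ** C = A ** C - B ** C"
  by (simp add: matrix_matrix_mult_def vec_eq_iff sum_subtractf left_diff_distrib)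
lemma mma_r: "((A::real^'n^'n) + B) ** C = A ** C + B ** C"
  by (simp add: matrix_matrix_mult_def vec_eq_iff sum.distrib distrib_right)
lemma tr_diff: "transpose ((A::real^'n^'n) - B) = transpose A - transpose B"
  by (simp add: transpose_def vec_eq_iff)

definition sp :: "real^'n^'n \<Rightarrow> bool" where
  "sp A \<longleftrightarrow> transpose A = A \<and> A ** A = A"

lemma sp_compl: "sp A \<Longrightarrow> sp (mat 1 - A)"
  unfolding sp_def by (simp add: tr_diff mmd_l mmd_r)

lemma sp_gram: assumes "sp A" shows "transpose B ** A ** B = transpose (A ** B) ** (A ** B)"
proof -
  have "transpose (A ** B) ** (A ** B) = transpose B ** (transpose A ** A) ** B"
    by (simp add: matrix_transpose_mul matrix_mul_assoc)
  also have "\<dots> = transpose B ** A ** B" using assms unfolding sp_def by simp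
  finally show ?thesis by simp
qed

definition W :: "('n \<Rightarrow> real) \<Rightarrow> real^'n^'n" where
  "W w = (\<chi> i j. if i = j then w i else 0)"

lemma trace_W: "trace (W w ** X) = (\<Sum>j\<in>UNIV. w j * X $ j $ j)"
  unfolding trace_def W_def matrix_matrix_mult_def
  by (simp add: if_distrib[where f="\<lambda>x. x * _"] cong: if_cong)

lemma hs_diag_sq:
  fixes X :: "real^'n^'n"
  assumes "sp X"
  shows "(hs_norm (X ** W d))^2 = (\<Sum>j\<in>UNIV. (d j)^2 * X $ j $ j)"
proof -
  have e: "(X ** W d) $ i $ j = X $ i $ j * d j" for i j
    by (simp add: W_def matrix_matrix_mult_def if_distrib cong: if_cong)
  have "(hs_norm (X ** W d))^2 = (\<Sum>i\<in>UNIV. \<Sum>j\<in>UNIV. (X $ i $ j * d j)^2)"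
    unfolding hs_norm_def e by (simp add: sum_nonneg)
  also have "\<dots> = (\<Sum>j\<in>UNIV. \<Sum>i\<in>UNIV. (d j)^2 * (X $ i $ j)^2)"
    by (subst sum.swap) (simp add: power_mult_distrib mult.commute)
  also have "\<dots> = (\<Sum>j\<in>UNIV. (d j)^2 * X $ j $ j)"
    using proj_diag[of X] assms unfolding sp_def by (simp add: sum_distrib_left)
  finally show ?thesis .
qed

lemma W_left: "(W w ** X) $ i $ j = w i * (X::real^'n^'n) $ i $ j"
  unfolding W_def matrix_matrix_mult_def
  by (simp add: if_distrib[where f="\<lambda>x. x * _"] cong: if_cong)

lemma W_right: "((X::real^'n^'n) ** W w) $ i $ j = X $ i $ j * w j"
  unfolding W_def matrix_matrix_mult_def
  by (simp add: if_distrib[where f="\<lambda>x. _ * x"] cong: if_cong)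

lemma sp_diag_bounds:
  assumes "sp (P::real^'n^'n)"
  shows "0 \<le> P $ j $ j" "P $ j $ j \<le> 1"
proof -
  show "0 \<le> P $ j $ j" using assms proj_diag_nonneg unfolding sp_def by blast
  have "0 \<le> (mat 1 - P) $ j $ j" using sp_compl[OF assms] proj_diag_nonneg unfolding sp_def by blast
  then show "P $ j $ j \<le> 1" by (simp add: mat_def)
qed

lemma core_LP:
  fixes P :: "real^'n^'n" and w :: "'n \<Rightarrow> real" and T :: "'n set"
  assumes sP: "sp P" and trP: "trace P = real r"
    and cT: "card T = r" and ab: "b \<le> a" and wT: "\<And>j. j \<in> T \<Longrightarrow> a \<le> w j"
    and wTc: "\<And>j. j \<notin> T \<Longrightarrow> w j \<le> b"
    and opt: "(\<Sum>j\<in>T. w j) \<le> (\<Sum>j\<in>UNIV. w j * P $ j $ j)"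
  shows "\<And>j. P $ j $ j \<noteq> 0 \<Longrightarrow> a \<le> w j" "\<And>j. P $ j $ j \<noteq> 1 \<Longrightarrow> w j \<le> b"
proof -
  define p where "p j = P $ j $ j" for j
  have p0: "0 \<le> p j" and p1: "p j \<le> 1" for j using sp_diag_bounds[OF sP] by (auto simp: p_def)
  have sump: "(\<Sum>j\<in>UNIV. p j) = real r" using trP by (simp add: trace_def p_def)
  define s where "s = (\<Sum>j\<in>T. 1 - p j)"
  have split: "(\<Sum>j\<in>UNIV. f j) = (\<Sum>j\<in>T. f j) + (\<Sum>j\<in>-T. f j)" for f :: "'n \<Rightarrow> real"
    by (metis Compl_eq_Diff_UNIV add.commute finite subset_UNIV sum.subset_diff)
  have sT: "s = real r - (\<Sum>j\<in>T. p j)" using cT by (simp add: s_def sum_subtractf)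
  have sTc: "(\<Sum>j\<in>-T. p j) = s" using split[of p] sump sT by simp
  define X1 where "X1 = (\<Sum>j\<in>T. (w j - a) * (1 - p j))"
  define X3 where "X3 = (\<Sum>j\<in>-T. (b - w j) * p j)"
  have X1e: "X1 = (\<Sum>j\<in>T. w j) - (\<Sum>j\<in>T. w j * p j) - a * s"
  proof -
    have "X1 = (\<Sum>j\<in>T. w j - w j * p j - a * (1 - p j))"
      unfolding X1_def by (rule sum.cong) (auto simp: algebra_simps)
    also have "\<dots> = (\<Sum>j\<in>T. w j) - (\<Sum>j\<in>T. w j * p j) - a * s"
      by (simp add: sum_subtractf s_def sum_distrib_left[symmetric])
    finally show ?thesis .
  qed
  have X3e: "X3 = b * s - (\<Sum>j\<in>-T. w j * p j)"
    by (simp add: X3_def sTc[symmetric] algebra_simps sum_subtractf sum_distrib_left)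
  have X1n: "0 \<le> X1" unfolding X1_def using wT p1 by (auto intro!: sum_nonneg mult_nonneg_nonneg)
  have X3n: "0 \<le> X3" unfolding X3_def using wTc p0 by (auto intro!: sum_nonneg mult_nonneg_nonneg)
  have sn: "0 \<le> s" unfolding s_def using p1 by (auto intro!: sum_nonneg)
  have X2n: "0 \<le> (a - b) * s" using ab sn by simp
  have tot: "X1 + (a - b) * s + X3 \<le> 0"
    using opt split[of "\<lambda>j. w j * p j"] X1e X3e by (simp add: p_def algebra_simps)
  have X1z: "X1 = 0" and X2z: "(a - b) * s = 0" and X3z: "X3 = 0" using tot X1n X3n X2n by linarith+
  have X1t: "(w j - a) * (1 - p j) = 0" if "j \<in> T" for j
    using X1z unfolding X1_def using wT p1 that
    by (subst (asm) sum_nonneg_eq_0_iff) (auto intro!: mult_nonneg_nonneg)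
  have X3t: "(b - w j) * p j = 0" if "j \<notin> T" for j
    using X3z unfolding X3_def using wTc p0 that
    by (subst (asm) sum_nonneg_eq_0_iff) (auto intro!: mult_nonneg_nonneg)
  show "a \<le> w j" if "P $ j $ j \<noteq> 0" for j
  proof (cases "j \<in> T")
    case True then show ?thesis using wT by blast
  next
    case False
    have pj: "0 < p j" using p0[of j] that by (simp add: p_def)
    have "w j = b" using X3t[OF False] pj by simp
    moreover have "p j \<le> s" unfolding sTc[symmetric]
      using False p0 by (intro member_le_sum) auto
    then have "a = b" using X2z pj by auto
    ultimately show ?thesis by simp
  qed
  show "w j \<le> b" if "P $ j $ j \<noteq> 1" for j
  proof (cases "j \<in> T")
    case False then show ?thesis using wTc by blast
  next
    case True
    have pj: "0 < 1 - p j" using p1[of j] that by (simp add: p_def)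
    have "w j = a" using X1t[OF True] pj by simp
    moreover have "1 - p j \<le> s" unfolding s_def
      using True p1 by (intro member_le_sum) auto
    then have "a = b" using X2z pj by auto
    ultimately show ?thesis by simp
  qed
qed

lemma sp_offdiag:
  assumes sP: "sp (P::real^'n^'n)" and ml: "m \<noteq> l" and nz: "P $ l $ m \<noteq> 0"
  shows "P $ m $ m \<noteq> 0 \<and> P $ m $ m \<noteq> 1"
proof -
  have "(\<Sum>k\<in>{m,l}. (P $ k $ m)^2) \<le> (\<Sum>k\<in>UNIV. (P $ k $ m)^2)"
    by (rule sum_mono2) auto
  then have "(P $ m $ m)^2 + (P $ l $ m)^2 \<le> P $ m $ m"
    using ml proj_diag[of P m] sP unfolding sp_def by simp
  moreover have "0 < (P $ l $ m)^2" using nz by simp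
  ultimately show ?thesis by auto
qed

lemma core_comm:
  assumes sP: "sp (P::real^'n^'n)" and ab: "b \<le> a"
    and Fa: "\<And>j. P $ j $ j \<noteq> 0 \<Longrightarrow> a \<le> w j" and Fb: "\<And>j. P $ j $ j \<noteq> 1 \<Longrightarrow> w j \<le> b"
  shows "W w ** P = P ** W w"
proof -
  have sym: "P $ k $ l = P $ l $ k" for k l
  proof -
    have "transpose P $ l $ k = P $ l $ k" using sP unfolding sp_def by simp
    then show ?thesis by (simp add: transpose_def)
  qed
  have key: "w i = w j" if "P $ i $ j \<noteq> 0" for i j
  proof (cases "i = j")
    case False
    have "P $ i $ i \<noteq> 0 \<and> P $ i $ i \<noteq> 1"
      using sp_offdiag[OF sP, of i j] False that sym[of i j] by auto
    then have "w i = a" using Fa Fb ab by force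
    moreover have "P $ j $ j \<noteq> 0 \<and> P $ j $ j \<noteq> 1"
      using sp_offdiag[OF sP, of j i] False that by auto
    then have "w j = a" using Fa Fb ab by force
    ultimately show ?thesis by simp
  qed simp
  show ?thesis
    by (simp add: vec_eq_iff W_left W_right) (metis key mult.commute mult_zero_right)
qed

lemma mm0l[simp]: "(0::real^'n^'n) ** A = 0"
  by (simp add: matrix_matrix_mult_def vec_eq_iff)
lemma mm0r[simp]: "(A::real^'n^'n) ** 0 = 0"
  by (simp add: matrix_matrix_mult_def vec_eq_iff)
lemma trace0[simp]: "trace (0::real^'n^'n) = 0"
  by (simp add: trace_def)

lemma trace_decomp:
  fixes P P' :: "real^'n^'n"
  assumes sP: "sp P" and comm: "W w ** P = P ** W w"
  shows "trace (W w ** P') = trace (W w ** (P ** P' ** P))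
           + trace (W w ** ((mat 1 - P) ** P' ** (mat 1 - P)))"
proof -
  define Q where "Q = mat 1 - P"
  define M where "M = W w"
  have PQ1: "P + Q = mat 1" by (simp add: Q_def)
  have QP: "Q ** P = 0" using sP by (simp add: Q_def mmd_r sp_def)
  have PQ: "P ** Q = 0" using sP by (simp add: Q_def mmd_l sp_def)
  have MQ: "M ** Q = Q ** M" using comm by (simp add: Q_def M_def mmd_l mmd_r)
  have "P' = (P + Q) ** P' ** (P + Q)" by (simp add: PQ1)
  also have "\<dots> = P ** P' ** P + P ** P' ** Q + Q ** P' ** P + Q ** P' ** Q"
    by (simp add: matrix_add_ldistrib mma_r algebra_simps)
  finally have dec: "M ** P' = M ** (P ** P' ** P) + M ** (P ** P' ** Q) + M ** (Q ** P' ** P) + M ** (Q ** P' ** Q)"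
    by (metis matrix_add_ldistrib)
  have c1: "trace (M ** (P ** P' ** Q)) = 0"
  proof -
    have "trace (M ** (P ** P' ** Q)) = trace ((M ** P ** P') ** Q)" by (simp add: matrix_mul_assoc)
    also have "\<dots> = trace (Q ** (M ** P ** P'))" by (rule trace_mul_sym)
    also have "Q ** (M ** P ** P') = (Q ** M) ** P ** P'" by (simp add: matrix_mul_assoc)
    also have "\<dots> = (M ** Q) ** P ** P'" by (simp only: MQ)
    also have "\<dots> = M ** (Q ** P) ** P'" by (simp add: matrix_mul_assoc)
    finally show ?thesis by (simp add: QP)
  qed
  have c2: "trace (M ** (Q ** P' ** P)) = 0"
  proof -
    have "trace (M ** (Q ** P' ** P)) = trace ((M ** Q ** P') ** P)" by (simp add: matrix_mul_assoc)
    also have "\<dots> = trace (P ** (M ** Q ** P'))" by (rule trace_mul_sym)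
    also have "P ** (M ** Q ** P') = (P ** M) ** Q ** P'" by (simp add: matrix_mul_assoc)
    also have "\<dots> = (M ** P) ** Q ** P'" by (simp only: comm M_def)
    also have "\<dots> = M ** (P ** Q) ** P'" by (simp add: matrix_mul_assoc)
    finally show ?thesis by (simp add: PQ)
  qed
  show ?thesis using dec c1 c2 by (simp add: trace_add M_def Q_def)
qed

lemma trace_PP'P:
  fixes P P' :: "real^'n^'n"
  assumes sP: "sp P"
  shows "trace (P ** P' ** P) = trace (P' ** P)"
proof -
  have "trace (P ** P' ** P) = trace (P ** (P ** P'))" by (rule trace_mul_sym)
  also have "\<dots> = trace ((P ** P) ** P')" by (simp add: matrix_mul_assoc)
  also have "\<dots> = trace (P ** P')" using sP by (simp add: sp_def)
  also have "\<dots> = trace (P' ** P)" by (rule trace_mul_sym)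
  finally show ?thesis .
qed

lemma trace_P'P_nonneg:
  fixes P P' :: "real^'n^'n"
  assumes sP: "sp P" and sP': "sp P'"
  shows "0 \<le> trace (P' ** P)"
proof -
  have "P ** P' ** P = transpose (P' ** P) ** (P' ** P)"
    using sp_gram[OF sP', of P] sP by (simp add: sp_def)
  then have "0 \<le> trace (P ** P' ** P)" unfolding trace_def by (simp add: diagTT_nonneg sum_nonneg)
  then show ?thesis using trace_PP'P[OF sP] by simp
qed

lemma R_part:
  fixes P P' :: "real^'n^'n"
  assumes sP: "sp P" and sP': "sp P'" and Fa: "\<And>j. P $ j $ j \<noteq> 0 \<Longrightarrow> a \<le> w j"
  shows "a * (trace P - trace (P' ** P)) \<le> trace (W w ** P) - trace (W w ** (P ** P' ** P))"
proof -
  define R where "R = P ** (mat 1 - P') ** P"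
  have Re: "R = P - P ** P' ** P" using sP by (simp add: R_def mmd_l mmd_r sp_def)
  have Rg: "R = transpose ((mat 1 - P') ** P) ** ((mat 1 - P') ** P)"
    using sp_gram[OF sp_compl[OF sP'], of P] sP by (simp add: R_def sp_def)
  have Rn: "0 \<le> R $ j $ j" for j unfolding Rg by (rule diagTT_nonneg)
  have Rz: "R $ j $ j = 0" if "P $ j $ j = 0" for j
  proof -
    have "((mat 1 - P') ** P) $ k $ j = 0" for k
      using proj_col_zero[of P j] sP that unfolding sp_def by (simp add: matrix_matrix_mult_def)
    then show ?thesis unfolding Rg diagTT by simp
  qed
  have "a * trace R = (\<Sum>j\<in>UNIV. a * R $ j $ j)" by (simp add: trace_def sum_distrib_left)
  also have "\<dots> \<le> (\<Sum>j\<in>UNIV. w j * R $ j $ j)"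
  proof (rule sum_mono)
    fix j show "a * R $ j $ j \<le> w j * R $ j $ j"
      using Fa[of j] Rz[of j] Rn[of j] by (cases "P $ j $ j = 0") (auto intro: mult_right_mono)
  qed
  also have "\<dots> = trace (W w ** R)" by (simp add: trace_W)
  also have "\<dots> = trace (W w ** P) - trace (W w ** (P ** P' ** P))"
    by (simp add: Re mmd_l trace_sub)
  finally show ?thesis using trace_PP'P[OF sP, of P'] by (simp add: Re trace_sub)
qed

lemma X_part:
  fixes P P' :: "real^'n^'n"
  assumes sP: "sp P" and sP': "sp P'"
  defines "x \<equiv> \<lambda>j. ((mat 1 - P) ** P' ** (mat 1 - P)) $ j $ j"
  shows "trace (W w ** ((mat 1 - P) ** P' ** (mat 1 - P))) = (\<Sum>j\<in>UNIV. w j * x j)"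
    and "\<And>j. 0 \<le> x j" and "\<And>j. x j \<le> 1 - P $ j $ j"
    and "\<And>j. P $ j $ j = 1 \<Longrightarrow> x j = 0"
    and "(\<Sum>j\<in>UNIV. x j) = trace P' - trace (P' ** P)"
proof -
  define Q where "Q = mat 1 - P"
  have sQ: "sp Q" using sp_compl[OF sP] by (simp add: Q_def)
  have Xg: "Q ** P' ** Q = transpose (P' ** Q) ** (P' ** Q)"
    using sp_gram[OF sP', of Q] sQ by (simp add: sp_def)
  show "trace (W w ** ((mat 1 - P) ** P' ** (mat 1 - P))) = (\<Sum>j\<in>UNIV. w j * x j)"
    by (simp add: trace_W x_def)
  show "0 \<le> x j" for j unfolding x_def Q_def[symmetric] Xg by (rule diagTT_nonneg)
  show "x j = 0" if "P $ j $ j = 1" for j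
  proof -
    have "Q $ j $ j = 0" using that by (simp add: Q_def mat_def)
    then have "(P' ** Q) $ k $ j = 0" for k
      using proj_col_zero[of Q j] sQ unfolding sp_def by (simp add: matrix_matrix_mult_def)
    then show ?thesis unfolding x_def Q_def[symmetric] Xg diagTT by simp
  qed
  show "x j \<le> 1 - P $ j $ j" for j
  proof -
    have Ye: "Q ** (mat 1 - P') ** Q = Q - Q ** P' ** Q"
      using sQ by (simp add: mmd_l mmd_r sp_def)
    have "Q ** (mat 1 - P') ** Q = transpose ((mat 1 - P') ** Q) ** ((mat 1 - P') ** Q)"
      using sp_gram[OF sp_compl[OF sP'], of Q] sQ by (simp add: sp_def)
    then have "0 \<le> (Q ** (mat 1 - P') ** Q) $ j $ j" by (simp add: diagTT_nonneg)
    then have "0 \<le> Q $ j $ j - (Q ** P' ** Q) $ j $ j" by (simp only: Ye vector_minus_component)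
    moreover have "Q $ j $ j = 1 - P $ j $ j" by (simp add: Q_def mat_def)
    ultimately show ?thesis unfolding x_def Q_def[symmetric] by simp
  qed
  have "(\<Sum>j\<in>UNIV. x j) = trace ((Q ** P') ** Q)" by (simp add: trace_def x_def Q_def)
  also have "\<dots> = trace (Q ** (Q ** P'))" by (rule trace_mul_sym)
  also have "\<dots> = trace ((Q ** Q) ** P')" by (simp add: matrix_mul_assoc)
  also have "\<dots> = trace (Q ** P')" using sQ by (simp add: sp_def)
  also have "\<dots> = trace P' - trace (P ** P')" by (simp add: Q_def mmd_r trace_sub)
  also have "trace (P ** P') = trace (P' ** P)" by (rule trace_mul_sym)
  finally show "(\<Sum>j\<in>UNIV. x j) = trace P' - trace (P' ** P)" .
qed

lemma hs_proj_diff: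
  fixes P P' :: "real^'n^'n"
  assumes sP: "sp P" and sP': "sp P'"
  shows "(hs_norm (P' - P))^2 = trace P' + trace P - 2 * trace (P' ** P)"
proof -
  have "(hs_norm (P' - P))^2 = trace ((P' - P) ** (P' - P))"
    using sP sP' by (simp add: hs_sq tr_diff sp_def)
  also have "(P' - P) ** (P' - P) = P' ** P' - P' ** P - (P ** P' - P ** P)"
    by (simp add: mmd_l mmd_r)
  also have "trace \<dots> = trace P' - trace (P' ** P) - (trace (P ** P') - trace P)"
    using sP sP' by (simp add: trace_sub sp_def)
  also have "trace (P ** P') = trace (P' ** P)" by (rule trace_mul_sym)
  finally show ?thesis by simp
qed

lemma sum_split_T: "(\<Sum>j\<in>UNIV. f j) = (\<Sum>j\<in>T. f j) + (\<Sum>j\<in>-T. (f j::real))" for T :: "'n::finite set"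
  by (metis Compl_eq_Diff_UNIV add.commute finite subset_UNIV sum.subset_diff)

lemma core:
  fixes P P' :: "real^'n^'n" and w :: "'n \<Rightarrow> real" and T :: "'n set"
  assumes sP: "sp P" and sP': "sp P'" and trP: "trace P = real r" and trP': "trace P' = real r"
    and cT: "card T = r" and ab: "b \<le> a" and wT: "\<And>j. j \<in> T \<Longrightarrow> a \<le> w j"
    and wTc: "\<And>j. j \<notin> T \<Longrightarrow> w j \<le> b"
    and opt: "(\<Sum>j\<in>T. w j) \<le> trace (W w ** P)"
  shows "(a - b) * (real r - trace (P' ** P)) \<le> trace (W w ** P) - trace (W w ** P')"
    and "\<exists>y. (\<forall>j. j \<notin> T \<longrightarrow> 0 \<le> y j \<and> y j \<le> 1) \<and> (\<Sum>j\<in>-T. y j) \<le> real r \<and>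
          a * (real r - trace (P' ** P)) - (\<Sum>j\<in>-T. w j * y j) \<le> trace (W w ** P) - trace (W w ** P')"
proof -
  have opt': "(\<Sum>j\<in>T. w j) \<le> (\<Sum>j\<in>UNIV. w j * P $ j $ j)" using opt by (simp add: trace_W)
  note LP = core_LP[OF sP trP cT ab wT wTc opt']
  have comm: "W w ** P = P ** W w" by (rule core_comm[OF sP ab LP(1) LP(2)])
  note dec = trace_decomp[OF sP comm, of P']
  note Rp = R_part[OF sP sP' LP(1)]
  define x where "x j = ((mat 1 - P) ** P' ** (mat 1 - P)) $ j $ j" for j
  note XP = X_part[OF sP sP', folded x_def]
  have XP1: "trace (W w ** ((mat 1 - P) ** P' ** (mat 1 - P))) = (\<Sum>j\<in>UNIV. w j * x j)"
    by (simp add: trace_W x_def)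
  define d where "d = real r - trace (P' ** P)"
  have sumx: "(\<Sum>j\<in>UNIV. x j) = d" using XP(5) trP' by (simp add: d_def)
  have main: "a * d - (\<Sum>j\<in>UNIV. w j * x j) \<le> trace (W w ** P) - trace (W w ** P')"
    using Rp dec XP1 trP by (simp add: d_def)
  have xb: "(\<Sum>j\<in>UNIV. w j * x j) \<le> b * d"
  proof -
    have "(\<Sum>j\<in>UNIV. w j * x j) \<le> (\<Sum>j\<in>UNIV. b * x j)"
    proof (rule sum_mono)
      fix j show "w j * x j \<le> b * x j"
        using XP(2)[of j] XP(4)[of j] LP(2)[of j]
        by (cases "P $ j $ j = 1") (auto intro: mult_right_mono)
    qed
    also have "\<dots> = b * d" using sumx by (simp add: sum_distrib_left[symmetric])
    finally show ?thesis .
  qed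
  show "(a - b) * (real r - trace (P' ** P)) \<le> trace (W w ** P) - trace (W w ** P')"
    using main xb by (simp add: d_def algebra_simps)
  define p where "p j = P $ j $ j" for j
  have p0: "0 \<le> p j" and p1: "p j \<le> 1" for j using sp_diag_bounds[OF sP] by (auto simp: p_def)
  have sump: "(\<Sum>j\<in>UNIV. p j) = real r" using trP by (simp add: trace_def p_def)
  define s where "s = (\<Sum>j\<in>T. 1 - p j)"
  have sT: "s = real r - (\<Sum>j\<in>T. p j)" using cT by (simp add: s_def sum_subtractf)
  have sTc: "(\<Sum>j\<in>-T. p j) = s" using sum_split_T[of p T] sump sT by simp
  define t where "t = (\<Sum>j\<in>T. x j)"
  have t0: "0 \<le> t" unfolding t_def using XP(2) by (simp add: sum_nonneg)
  have ts: "t \<le> s" unfolding t_def s_def using XP(3) by (intro sum_mono) (simp add: p_def)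
  have wxT: "(\<Sum>j\<in>T. w j * x j) = b * t"
    unfolding t_def sum_distrib_left
  proof (rule sum.cong)
    fix j assume j: "j \<in> T"
    show "w j * x j = b * x j"
    proof (cases "x j = 0")
      case False
      then have "P $ j $ j \<noteq> 1" using XP(4) by blast
      then have "w j \<le> b" using LP(2) by blast
      then have "w j = b" using wT[OF j] ab by simp
      then show ?thesis by simp
    qed simp
  qed simp
  have wpTc: "(\<Sum>j\<in>-T. w j * p j) = b * s"
    unfolding sTc[symmetric] sum_distrib_left
  proof (rule sum.cong)
    fix j assume j: "j \<in> -T"
    show "w j * p j = b * p j"
    proof (cases "p j = 0")
      case False
      then have "a \<le> w j" using LP(1) by (simp add: p_def)
      then have "w j = b" using wTc[of j] j ab by simp
      then show ?thesis by simp
    qed simp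
  qed simp
  define c where "c = (if s = 0 then 0 else t / s)"
  have cs: "c * s = t" using t0 ts by (auto simp: c_def)
  have c0: "0 \<le> c" and c1: "c \<le> 1" using t0 ts by (auto simp: c_def divide_le_eq_1)
  define y where "y j = x j + c * p j" for j
  have yb: "\<forall>j. j \<notin> T \<longrightarrow> 0 \<le> y j \<and> y j \<le> 1"
  proof (intro allI impI conjI)
    fix j
    show "0 \<le> y j" unfolding y_def using XP(2)[of j] c0 p0[of j] by simp
    have "c * p j \<le> p j" using c0 c1 p0[of j] by (metis mult_left_le_one_le)
    then show "y j \<le> 1" unfolding y_def using XP(3)[of j] by (simp add: p_def)
  qed
  have sumy: "(\<Sum>j\<in>-T. y j) = d"
  proof -
    have "(\<Sum>j\<in>-T. y j) = (\<Sum>j\<in>-T. x j) + c * s"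
      by (simp add: y_def sum.distrib sum_distrib_left[symmetric] sTc)
    also have "\<dots> = (\<Sum>j\<in>UNIV. x j)" using cs sum_split_T[of x T] by (simp add: t_def)
    finally show ?thesis using sumx by simp
  qed
  have dr: "d \<le> real r" using trace_P'P_nonneg[OF sP sP'] by (simp add: d_def)
  have sumwy: "(\<Sum>j\<in>-T. w j * y j) = (\<Sum>j\<in>UNIV. w j * x j)"
  proof -
    have "(\<Sum>j\<in>-T. w j * y j) = (\<Sum>j\<in>-T. w j * x j) + c * (\<Sum>j\<in>-T. w j * p j)"
      by (simp add: y_def algebra_simps sum.distrib sum_distrib_left)
    also have "\<dots> = (\<Sum>j\<in>-T. w j * x j) + (\<Sum>j\<in>T. w j * x j)"
      using wpTc wxT cs by (simp add: algebra_simps)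
    also have "\<dots> = (\<Sum>j\<in>UNIV. w j * x j)" using sum_split_T[of "\<lambda>j. w j * x j" T] by simp
    finally show ?thesis .
  qed
  show "\<exists>y. (\<forall>j. j \<notin> T \<longrightarrow> 0 \<le> y j \<and> y j \<le> 1) \<and> (\<Sum>j\<in>-T. y j) \<le> real r \<and>
          a * (real r - trace (P' ** P)) - (\<Sum>j\<in>-T. w j * y j) \<le> trace (W w ** P) - trace (W w ** P')"
    using yb sumy dr sumwy main by (intro exI[of _ y]) (simp add: d_def)
qed

lemma knap:
  fixes \<sigma> :: "'n::finite \<Rightarrow> nat" and lam :: "nat \<Rightarrow> real" and y :: "'n \<Rightarrow> real"
  assumes bij: "bij_betw \<sigma> UNIV {1..CARD('n)}"
    and mono: "\<And>i j. 1 \<le> i \<Longrightarrow> i \<le> j \<Longrightarrow> (lam j)^2 \<le> (lam i)^2"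
    and zero: "\<And>i. CARD('n) < i \<Longrightarrow> lam i = 0" and r1: "1 \<le> r"
    and y: "\<forall>j. j \<notin> {j. \<sigma> j \<le> r} \<longrightarrow> 0 \<le> y j \<and> y j \<le> 1"
    and ys: "(\<Sum>j\<in>-{j. \<sigma> j \<le> r}. y j) \<le> real r"
  shows "(\<Sum>j\<in>-{j. \<sigma> j \<le> r}. (lam (\<sigma> j))^2 * y j) \<le> (\<Sum>i=r+1..2*r. (lam i)^2)"
proof -
  define Tc where "Tc = -{j. \<sigma> j \<le> r}"
  define \<theta> where "\<theta> = (lam (2*r))^2"
  define K where "K = {j. r < \<sigma> j \<and> \<sigma> j \<le> 2*r}"
  define I where "I = {r+1..2*r} \<inter> {..CARD('n)}"
  define w where "w j = (lam (\<sigma> j))^2" for j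
  have th0: "0 \<le> \<theta>" by (simp add: \<theta>_def)
  have KT: "K \<subseteq> Tc" by (auto simp: K_def Tc_def)
  have inj: "inj \<sigma>" using bij bij_betw_def by blast
  have s1: "1 \<le> \<sigma> j" for j using bij by (auto simp: bij_betw_def)
  have sM: "\<sigma> j \<le> CARD('n)" for j using bij by (auto simp: bij_betw_def)
  have imK: "\<sigma> ` K = I"
  proof
    show "\<sigma> ` K \<subseteq> I" using sM by (auto simp: K_def I_def)
    show "I \<subseteq> \<sigma> ` K"
    proof
      fix i assume i: "i \<in> I"
      then have "i \<in> {1..CARD('n)}" using r1 by (auto simp: I_def)
      then obtain j where "\<sigma> j = i" using bij by (metis bij_betw_def imageE)
      then show "i \<in> \<sigma> ` K" using i by (auto simp: K_def I_def)
    qed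
  qed
  have sumK: "(\<Sum>j\<in>K. w j) = (\<Sum>i\<in>I. (lam i)^2)"
  proof -
    have "(\<Sum>i\<in>I. (lam i)^2) = (\<Sum>i\<in>\<sigma> ` K. (lam i)^2)" using imK by simp
    also have "\<dots> = (\<Sum>j\<in>K. (lam (\<sigma> j))^2)"
      using inj by (subst sum.reindex) (auto intro: inj_on_subset)
    finally show ?thesis by (simp add: w_def)
  qed
  have cardK: "card K = card I" using imK inj by (metis card_image inj_on_subset subset_UNIV)
  have sumI: "(\<Sum>i=r+1..2*r. (lam i)^2) = (\<Sum>i\<in>I. (lam i)^2)"
    by (rule sum.mono_neutral_right) (auto simp: I_def zero)
  have extra: "\<theta> * (real r - real (card I)) = 0"
  proof (cases "2*r \<le> CARD('n)")
    case True
    then have "I = {r+1..2*r}" by (auto simp: I_def)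
    then show ?thesis by simp
  next
    case False then show ?thesis by (simp add: \<theta>_def zero)
  qed
  have tm: "(w j - \<theta>) * y j \<le> (if j \<in> K then w j - \<theta> else 0)" if "j \<in> Tc" for j
  proof -
    have yj: "0 \<le> y j" "y j \<le> 1" using y that by (auto simp: Tc_def)
    show ?thesis
    proof (cases "j \<in> K")
      case True
      then have "\<theta> \<le> w j" unfolding \<theta>_def w_def K_def using mono[of "\<sigma> j" "2*r"] s1 by auto
      then show ?thesis using True yj by (simp add: mult_left_le)
    next
      case False
      then have "\<sigma> j > 2 * r" using that by (auto simp: K_def Tc_def)
      then have "w j \<le> \<theta>" unfolding \<theta>_def w_def using mono[of "2*r" "\<sigma> j"] r1 by auto
      then show ?thesis using False yj by (simp add: mult_nonpos_nonneg)
    qed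
  qed
  have "(\<Sum>j\<in>Tc. w j * y j) = (\<Sum>j\<in>Tc. (w j - \<theta>) * y j) + \<theta> * (\<Sum>j\<in>Tc. y j)"
    by (simp add: algebra_simps sum.distrib sum_distrib_left sum_subtractf)
  also have "\<dots> \<le> (\<Sum>j\<in>Tc. if j \<in> K then w j - \<theta> else 0) + \<theta> * real r"
    using tm ys th0 by (intro add_mono sum_mono mult_left_mono) (auto simp: Tc_def)
  also have "(\<Sum>j\<in>Tc. if j \<in> K then w j - \<theta> else 0) = (\<Sum>j\<in>K. w j - \<theta>)"
    using KT by (simp add: sum.If_cases Int_absorb1)
  also have "\<dots> + \<theta> * real r = (\<Sum>i\<in>I. (lam i)^2) + \<theta> * (real r - real (card I))"
    by (simp add: sum_subtractf sumK cardK algebra_simps)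
  finally show ?thesis using extra sumI by (simp add: Tc_def w_def)
qed

lemma orth_transpose: "orthogonal_matrix U \<Longrightarrow> orthogonal_matrix (transpose (U::real^'n^'n))"
  by (simp add: orthogonal_matrix_def)

lemma conj_facts:
  fixes U X :: "real^'n^'n"
  assumes oU: "orthogonal_matrix U" and X: "X \<in> orth_proj_rank r"
  shows "sp (transpose U ** X ** U)" "trace (transpose U ** X ** U) = real r"
proof -
  have UUt: "U ** transpose U = mat 1" and UtU: "transpose U ** U = mat 1"
    using oU by (auto simp: orthogonal_matrix_def)
  have sX: "transpose X = X" "X ** X = X" "rank X = r" using X by (auto simp: orth_proj_rank_def)
  have t1: "transpose (transpose U ** X ** U) = transpose U ** X ** U"
    using sX by (simp add: matrix_transpose_mul matrix_mul_assoc)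
  have "(transpose U ** X ** U) ** (transpose U ** X ** U) = transpose U ** X ** (U ** transpose U) ** X ** U"
    by (simp add: matrix_mul_assoc)
  also have "\<dots> = transpose U ** (X ** X) ** U" using UUt by (simp add: matrix_mul_assoc)
  finally have t2: "(transpose U ** X ** U) ** (transpose U ** X ** U) = transpose U ** X ** U"
    using sX by simp
  from t1 t2 show "sp (transpose U ** X ** U)" by (simp add: sp_def)
  have "trace ((transpose U ** X) ** U) = trace (U ** (transpose U ** X))" by (rule trace_mul_sym)
  also have "\<dots> = trace X" using UUt by (simp add: matrix_mul_assoc)
  also have "\<dots> = real r" using trace_rank[OF sX(1,2)] sX(3) by simp
  finally show "trace (transpose U ** X ** U) = real r" .
qed

lemma conj_hs:
  fixes U V X D :: "real^'n^'n"
  assumes oU: "orthogonal_matrix U" and oV: "orthogonal_matrix V"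
  shows "hs_norm (X ** (U ** D ** transpose V)) = hs_norm ((transpose U ** X ** U) ** D)"
proof -
  have UUt: "U ** transpose U = mat 1" using oU by (auto simp: orthogonal_matrix_def)
  have "X ** (U ** D ** transpose V) = U ** ((transpose U ** X ** U) ** D) ** transpose V"
    using UUt by (simp add: matrix_mul_assoc)
  then show ?thesis
    using hs_orth_left[OF oU] hs_orth_right[OF orth_transpose[OF oV]] by simp
qed

lemma conj_hs_diff:
  fixes U X Y :: "real^'n^'n"
  assumes oU: "orthogonal_matrix U"
  shows "hs_norm (X - Y) = hs_norm (transpose U ** X ** U - transpose U ** Y ** U)"
proof -
  have "transpose U ** X ** U - transpose U ** Y ** U = transpose U ** (X - Y) ** U"
    by (simp add: mmd_l mmd_r)
  then show ?thesis using hs_orth_left[OF orth_transpose[OF oU]] hs_orth_right[OF oU] by simp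
qed

theorem lemma2:
  fixes C \<pi> :: "real^'n^'n" and lam :: "nat \<Rightarrow> real" and r :: nat
  assumes r: "1 \<le> r" "r \<le> CARD('n)"
    and sv: "singular_values C lam"
    and pi: "\<pi> \<in> orth_proj_rank r"
    and max: "\<forall>\<pi>' \<in> orth_proj_rank r. hs_norm (\<pi>' ** C) \<le> hs_norm (\<pi> ** C)"
  shows "(\<forall>\<pi>' \<in> orth_proj_rank r.
            (hs_norm (\<pi>' ** C))^2 - (hs_norm (\<pi> ** C))^2
              \<le> - (1/2) * ((lam r)^2 - (lam (r+1))^2) * (hs_norm (\<pi>' - \<pi>))^2)
       \<and> (lam r > 0 \<longrightarrow>
          (\<forall>\<pi>' \<in> orth_proj_rank r.
            hs_norm (\<pi>' - \<pi>) \<ge> sqrt (2 * (\<Sum>i=r+1..2*r. (lam i)^2)) / lam r \<longrightarrow>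
            (hs_norm (\<pi>' ** C))^2 - (hs_norm (\<pi> ** C))^2
              \<le> - (1/2) * (lam r)^2 * (hs_norm (\<pi>' - \<pi>))^2 + (\<Sum>i=r+1..2*r. (lam i)^2)))"
proof -
  have sorted: "\<And>i j. 1 \<le> i \<Longrightarrow> i \<le> j \<Longrightarrow> j \<le> CARD('n) \<Longrightarrow> lam j \<le> lam i"
    and nonneg: "\<And>i. 1 \<le> i \<Longrightarrow> i \<le> CARD('n) \<Longrightarrow> 0 \<le> lam i"
    and zero: "\<And>i. CARD('n) < i \<Longrightarrow> lam i = 0"
    using sv unfolding singular_values_def by auto
  obtain U V and \<sigma> :: "'n \<Rightarrow> nat" where oU: "orthogonal_matrix U" and oV: "orthogonal_matrix V"
    and bij: "bij_betw \<sigma> UNIV {1..CARD('n)}"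
    and Ce: "C = U ** (\<chi> i j. if i = j then lam (\<sigma> i) else 0) ** transpose V"
    using sv unfolding singular_values_def by blast
  define d where "d i = lam (\<sigma> i)" for i
  define w where "w j = (d j)^2" for j
  have CW: "C = U ** W d ** transpose V" unfolding Ce W_def d_def ..
  have mono: "(lam j)^2 \<le> (lam i)^2" if "1 \<le> i" "i \<le> j" for i j
  proof (cases "j \<le> CARD('n)")
    case True
    then have "0 \<le> lam j" "lam j \<le> lam i" using that nonneg sorted by auto
    then show ?thesis by (simp add: power_mono)
  next
    case False then show ?thesis using zero by simp
  qed
  have s1: "1 \<le> \<sigma> j" and sM: "\<sigma> j \<le> CARD('n)" for j using bij by (auto simp: bij_betw_def)
  define T where "T = {j. \<sigma> j \<le> r}"
  have cT: "card T = r"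
  proof -
    have "\<sigma> ` T = {1..r}"
    proof
      show "\<sigma> ` T \<subseteq> {1..r}" using s1 by (auto simp: T_def)
      show "{1..r} \<subseteq> \<sigma> ` T"
      proof
        fix i assume i: "i \<in> {1..r}"
        then have "i \<in> {1..CARD('n)}" using r by auto
        then obtain j where "\<sigma> j = i" using bij by (metis bij_betw_def imageE)
        then show "i \<in> \<sigma> ` T" using i by (auto simp: T_def)
      qed
    qed
    moreover have "inj_on \<sigma> T" using bij by (auto simp: bij_betw_def intro: inj_on_subset)
    ultimately show ?thesis by (metis card_atLeastAtMost card_image diff_Suc_1)
  qed
  define a where "a = (lam r)^2"
  define b where "b = (lam (r+1))^2"
  have ab: "b \<le> a" unfolding a_def b_def using mono r by simp
  have wT: "a \<le> w j" if "j \<in> T" for j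
    using that mono[of "\<sigma> j" r] s1 r unfolding T_def a_def w_def d_def by auto
  have wTc: "w j \<le> b" if "j \<notin> T" for j
    using that mono[of "r+1" "\<sigma> j"] r unfolding T_def b_def w_def d_def by auto
  define cj where "cj X = transpose U ** X ** U" for X
  have f: "(hs_norm (X ** C))^2 = trace (W w ** cj X)" if "X \<in> orth_proj_rank r" for X
  proof -
    have "hs_norm (X ** C) = hs_norm (cj X ** W d)" unfolding CW cj_def by (rule conj_hs[OF oU oV])
    then show ?thesis using hs_diag_sq[OF conj_facts(1)[OF oU that], of d]
      by (simp add: cj_def trace_W w_def)
  qed
  define P0 where "P0 = W (\<lambda>j. if \<sigma> j \<le> r then 1 else 0)"
  define \<pi>0 where "\<pi>0 = U ** P0 ** transpose U"
  have UUt: "U ** transpose U = mat 1" and UtU: "transpose U ** U = mat 1"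
    using oU by (auto simp: orthogonal_matrix_def)
  have P0t: "transpose P0 = P0" by (simp add: P0_def W_def transpose_def vec_eq_iff)
  have P0i: "P0 ** P0 = P0" unfolding P0_def by (simp add: vec_eq_iff W_left) (simp add: W_def)
  have trP0: "trace P0 = real r"
  proof -
    have "trace P0 = (\<Sum>j\<in>UNIV. if \<sigma> j \<le> r then 1 else 0)" by (simp add: P0_def W_def trace_def)
    also have "\<dots> = real (card T)" by (simp add: sum.If_cases T_def)
    finally show ?thesis using cT by simp
  qed
  have pi0t: "transpose \<pi>0 = \<pi>0" using P0t by (simp add: \<pi>0_def matrix_transpose_mul matrix_mul_assoc)
  have pi0i: "\<pi>0 ** \<pi>0 = \<pi>0"
  proof -
    have "\<pi>0 ** \<pi>0 = U ** P0 ** (transpose U ** U) ** P0 ** transpose U"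
      by (simp add: \<pi>0_def matrix_mul_assoc)
    also have "\<dots> = U ** (P0 ** P0) ** transpose U" using UtU by (simp add: matrix_mul_assoc)
    finally show ?thesis using P0i by (simp add: \<pi>0_def)
  qed
  have trpi0: "trace \<pi>0 = real r"
  proof -
    have "trace ((U ** P0) ** transpose U) = trace (transpose U ** (U ** P0))" by (rule trace_mul_sym)
    also have "\<dots> = trace P0" using UtU by (simp add: matrix_mul_assoc)
    finally show ?thesis using trP0 by (simp add: \<pi>0_def)
  qed
  have pi0: "\<pi>0 \<in> orth_proj_rank r"
    using trace_rank[OF pi0t pi0i] trpi0 pi0t pi0i by (simp add: orth_proj_rank_def)
  have cjpi0: "cj \<pi>0 = P0"
  proof -
    have "cj \<pi>0 = (transpose U ** U) ** P0 ** (transpose U ** U)" by (simp add: cj_def \<pi>0_def matrix_mul_assoc)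
    then show ?thesis using UtU by simp
  qed
  define P where "P = cj \<pi>"
  have sP: "sp P" and trP: "trace P = real r" using conj_facts[OF oU pi] by (auto simp: P_def cj_def)
  have opt: "(\<Sum>j\<in>T. w j) \<le> trace (W w ** P)"
  proof -
    have "hs_norm (\<pi>0 ** C) \<le> hs_norm (\<pi> ** C)" using max pi0 by blast
    then have "(hs_norm (\<pi>0 ** C))^2 \<le> (hs_norm (\<pi> ** C))^2"
      by (rule power_mono) (simp add: hs_norm_def sum_nonneg)
    then have "trace (W w ** P0) \<le> trace (W w ** P)" using f[OF pi0] f[OF pi] cjpi0 by (simp add: P_def)
    moreover have "trace (W w ** P0) = (\<Sum>j\<in>T. w j)"
      unfolding trace_W by (simp add: P0_def W_def T_def if_distrib[where f="\<lambda>x. _ * x"] sum.If_cases cong: if_cong)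
    ultimately show ?thesis by simp
  qed
  have hsd: "(hs_norm (\<pi>' - \<pi>))^2 = 2 * (real r - trace (cj \<pi>' ** P))" if "\<pi>' \<in> orth_proj_rank r" for \<pi>'
  proof -
    note cf = conj_facts[OF oU that]
    have "hs_norm (\<pi>' - \<pi>) = hs_norm (cj \<pi>' - P)" unfolding P_def cj_def by (rule conj_hs_diff[OF oU])
    then show ?thesis using hs_proj_diff[OF sP, of "cj \<pi>'"] cf trP by (simp add: cj_def)
  qed
  have part1: "(hs_norm (\<pi>' ** C))^2 - (hs_norm (\<pi> ** C))^2
              \<le> - (1/2) * ((lam r)^2 - (lam (r+1))^2) * (hs_norm (\<pi>' - \<pi>))^2"
    if "\<pi>' \<in> orth_proj_rank r" for \<pi>'
  proof -
    note cf = conj_facts[OF oU that]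
    have "(a - b) * (real r - trace (cj \<pi>' ** P)) \<le> trace (W w ** P) - trace (W w ** cj \<pi>')"
      using core(1)[OF sP cf(1)[folded cj_def] trP cf(2)[folded cj_def] cT ab wT wTc opt] .
    moreover have "- (1/2) * ((lam r)^2 - (lam (r+1))^2) * (hs_norm (\<pi>' - \<pi>))^2
        = - ((a - b) * (real r - trace (cj \<pi>' ** P)))"
      using hsd[OF that] unfolding a_def b_def by simp
    ultimately show ?thesis using f[OF that] f[OF pi] unfolding P_def by linarith
  qed
  have part2: "(hs_norm (\<pi>' ** C))^2 - (hs_norm (\<pi> ** C))^2
              \<le> - (1/2) * (lam r)^2 * (hs_norm (\<pi>' - \<pi>))^2 + (\<Sum>i=r+1..2*r. (lam i)^2)"
    if "\<pi>' \<in> orth_proj_rank r" for \<pi>'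
  proof -
    note cf = conj_facts[OF oU that]
    obtain y where y: "\<forall>j. j \<notin> T \<longrightarrow> 0 \<le> y j \<and> y j \<le> 1" and ys: "(\<Sum>j\<in>-T. y j) \<le> real r"
      and ineq: "a * (real r - trace (cj \<pi>' ** P)) - (\<Sum>j\<in>-T. w j * y j) \<le> trace (W w ** P) - trace (W w ** cj \<pi>')"
      using core(2)[OF sP cf(1)[folded cj_def] trP cf(2)[folded cj_def] cT ab wT wTc opt] by blast
    have "(\<Sum>j\<in>-T. w j * y j) \<le> (\<Sum>i=r+1..2*r. (lam i)^2)"
      unfolding w_def d_def T_def
      by (rule knap[where \<sigma>=\<sigma> and lam=lam and y=y and r=r]) (use bij mono zero r(1) y ys in \<open>auto simp: T_def\<close>)
    moreover have "- (1/2) * (lam r)^2 * (hs_norm (\<pi>' - \<pi>))^2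
        = - (a * (real r - trace (cj \<pi>' ** P)))"
      using hsd[OF that] unfolding a_def by simp
    ultimately show ?thesis using ineq f[OF that] f[OF pi] unfolding P_def by linarith
  qed
  show ?thesis using part1 part2 by blast
qed

end
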